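(* For every positive integer $k$, $$\int_0^{\pi/2} x^2\cos^{2k-1}(x)\,dx = \frac14\,\frac{4^k H_k^{(2)}}{k\binom{2k}{k}}-\frac{4^k H_{2k}^{(2)}}{k\binom{2k}{k}}+\frac34\zeta(2)\,\frac{4^k}{k\binom{2k}{k}}.$$
   Context: For positive integers $n$, $H_n^{(2)}=\sum_{j=1}^n j^{-2}$ is the generalized harmonic number of order $2$; $\binom{2k}{k}$ is the central binomial coefficient and $\zeta$ is the Riemann zeta function. *)

theory Defs
  imports "HOL-Analysis.Analysis"
begin

definition harm2 :: "nat \<Rightarrow> real" where
  "harm2 n = (\<Sum>j=1..n. 1 / (real j)^2)"

definition zeta_real :: "real \<Rightarrow> real" where
  "zeta_real s = (\<Sum>n. 1 / (real (Suc n)) powr s)"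

end

theory Submission
  imports Defs
begin

definition II :: "nat \<Rightarrow> real" where "II n = integral {0..pi/2} (\<lambda>x. x^2 * cos x ^ n)"
definition JJ :: "nat \<Rightarrow> real" where "JJ n = integral {0..pi/2} (\<lambda>x. cos x ^ n)"

lemma intI: "(\<lambda>x. x^2 * cos x ^ n) integrable_on {0..pi/2}"
  by (intro integrable_continuous_real continuous_intros)
lemma intJ: "(\<lambda>x. cos x ^ n) integrable_on {0..pi/2}"
  by (intro integrable_continuous_real continuous_intros)

lemma dcos: "((\<lambda>x. cos x ^ Suc m) has_real_derivative (1 + real m) * (- sin x * cos x ^ m)) (at x within S)"
  by (rule DERIV_power_Suc) (auto intro!: derivative_eq_intros)

lemma alg1: fixes c sn p r :: real assumes "sn * sn = 1 - c*c"
  shows "c*p*c + (1+r)*(-sn*p) * sn = (r+2)*(p*(c*c)) - (r+1)*p"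
proof -
  have "(1+r)*(-sn*p) * sn = -(1+r)*p*(sn * sn)" by (simp add: algebra_simps)
  also have "\<dots> = -(1+r)*p*(1 - c*c)" using assms by simp
  finally show ?thesis by (simp add: algebra_simps)
qed
lemma alg2: fixes x c sn p r :: real assumes "sn * sn = 1 - c*c" "r + 2 \<noteq> 0"
  shows "x * (x * 1) * (c * p) * c +
     (x * (x * 1) * ((1 + r) * (- sn * p)) +
      (1 + (1 + 0)) * (x * 1) * (c * p)) *
     sn +
     2 / (r + (1 + (1 + 0))) *
     (x * ((1 + (1 + r)) * (- sn * (c * p))) +
      1 * (c * (c * p))) =
     (r + (1 + (1 + 0))) *
     (x * (x * 1) * (p * (c * (c * 1)))) -
     (r + 1) * (x * (x * 1) * p) +
     2 / (r + (1 + (1 + 0))) *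
     (p * (c * (c * 1)))"
proof -
  have h: "r + (1 + (1 + 0)) = r + 2" "(1 + (1 + 0)) = (2::real)" by simp_all
  show ?thesis unfolding h using assms(2) apply (simp add: field_simps)
    using assms(1) by algebra
qed

lemma int_lin2: assumes "f integrable_on S" "g integrable_on S"
  shows "integral S (\<lambda>x. (a::real) * f x - b * g x) = a * integral S f - b * integral S g"
proof -
  have a: "(\<lambda>x. a * f x) integrable_on S" "(\<lambda>x. b * g x) integrable_on S"
    using integrable_on_cmult_left[OF assms(1), of a] integrable_on_cmult_left[OF assms(2), of b] by simp_all
  show ?thesis using integral_diff[OF a] by simp
qed

lemma int_lin3: assumes "f integrable_on S" "g integrable_on S" "h integrable_on S"
  shows "integral S (\<lambda>x. (a::real) * f x - b * g x + c * h x) = a * integral S f - b * integral S g + c * integral S h"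
proof -
  have a: "(\<lambda>x. a * f x) integrable_on S" "(\<lambda>x. b * g x) integrable_on S" "(\<lambda>x. c * h x) integrable_on S"
    using integrable_on_cmult_left[OF assms(1), of a] integrable_on_cmult_left[OF assms(2), of b] 
      integrable_on_cmult_left[OF assms(3), of c] by simp_all
  show ?thesis using integral_add[OF integrable_diff[OF a(1,2)] a(3)] integral_diff[OF a(1,2)] by simp
qed

lemma FTC0:
  assumes "\<And>x. (G has_real_derivative g x) (at x within {0..pi/2})"
  shows "(g has_integral (G (pi/2) - G 0)) {0..pi/2}"
  by (rule fundamental_theorem_of_calculus) (auto intro: assms simp: has_real_derivative_iff_has_vector_derivative[symmetric])

lemma recJ: "real (m+2) * JJ (m+2) = real (m+1) * JJ m"
proof -
  let ?G = "\<lambda>x::real. cos x ^ Suc m * sin x"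
  have d: "(?G has_real_derivative (real (m+2) * cos x ^ (m+2) - real (m+1) * cos x ^ m)) (at x within {0..pi/2})" for x
  proof (rule DERIV_cong[OF DERIV_mult'[OF dcos DERIV_sin[THEN has_field_derivative_at_within]]])
    have ss: "sin x * sin x = 1 - cos x * cos x" using sin_cos_squared_add[of x] by (simp add: power2_eq_square)
    show "cos x ^ Suc m * cos x + (1 + real m) * (- sin x * cos x ^ m) * sin x = real (m + 2) * cos x ^ (m + 2) - real (m + 1) * cos x ^ m"
      proof -
      obtain p where p: "cos x ^ m = p" by simp
      show ?thesis unfolding power_Suc power_add power2_eq_square p using ss by simp algebra
    qed
  qed
  have "((\<lambda>x. real (m+2) * cos x ^ (m+2) - real (m+1) * cos x ^ m) has_integral (?G (pi/2) - ?G 0)) {0..pi/2}"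
    by (rule FTC0[OF d])
  hence "integral {0..pi/2} (\<lambda>x. real (m+2) * cos x ^ (m+2) - real (m+1) * cos x ^ m) = 0"
    by (simp add: integral_unique)
  thus ?thesis unfolding JJ_def using int_lin2[OF intJ intJ, of "real (m+2)" "m+2" "real (m+1)" m] by simp
qed

lemma recI: "real (m+2) * II (m+2) = real (m+1) * II m - 2 / real (m+2) * JJ (m+2)"
proof -
  let ?G = "\<lambda>x::real. x^2 * cos x ^ Suc m * sin x + 2 / real (m+2) * (x * cos x ^ Suc (Suc m))"
  let ?g = "\<lambda>x. real (m+2) * (x^2 * cos x ^ (m+2)) - real (m+1) * (x^2 * cos x ^ m) + 2 / real (m+2) * cos x ^ (m+2)"
  have d: "(?G has_real_derivative ?g x) (at x within {0..pi/2})" for x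
  proof (rule DERIV_cong[OF DERIV_add[OF DERIV_mult'[OF DERIV_mult'[OF DERIV_pow dcos] DERIV_sin[THEN has_field_derivative_at_within]] DERIV_cmult[OF DERIV_mult'[OF DERIV_ident dcos]]]])
    have ss: "sin x * sin x = 1 - cos x * cos x" using sin_cos_squared_add[of x] by (simp add: power2_eq_square)
    have m: "real (m+2) \<noteq> 0" by simp
    show "x\<^sup>2 * cos x ^ Suc m * cos x + (x\<^sup>2 * ((1 + real m) * (- sin x * cos x ^ m)) + real 2 * x ^ (2 - Suc 0) * cos x ^ Suc m) * sin x +
    2 / real (m + 2) * (x * ((1 + real (Suc m)) * (- sin x * cos x ^ Suc m)) + 1 * cos x ^ Suc (Suc m)) = ?g x"
      proof -
      obtain p where p: "cos x ^ m = p" by simp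
      have m': "real m + 2 \<noteq> 0" by simp
      show ?thesis unfolding power_Suc power_add power2_eq_square p using m' apply (simp add: field_simps)
        using ss by algebra
    qed
  qed
  have "(?g has_integral (?G (pi/2) - ?G 0)) {0..pi/2}"
    by (rule FTC0[OF d])
  hence "integral {0..pi/2} ?g = 0"
    by (simp add: integral_unique)
  thus ?thesis unfolding JJ_def II_def using int_lin3[OF intI intI intJ, of "real (m+2)" "m+2" "real (m+1)" m "2 / real (m+2)" "m+2"] by simp
qed


lemma JJ1: "JJ 1 = 1"
proof -
  have "(cos has_integral (sin (pi/2) - sin 0)) {0..pi/2}"
    by (rule FTC0) (auto intro!: derivative_eq_intros)
  thus ?thesis unfolding JJ_def by (simp add: integral_unique)
qed

lemma II1: "II 1 = pi^2/4 - 2"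
proof -
  let ?G = "\<lambda>x::real. x^2 * sin x + 2 * x * cos x - 2 * sin x"
  have "((\<lambda>x. x^2 * cos x) has_integral (?G (pi/2) - ?G 0)) {0..pi/2}"
    by (rule FTC0) (auto intro!: derivative_eq_intros simp: algebra_simps)
  hence "II 1 = ?G (pi/2) - ?G 0" unfolding II_def by (simp add: integral_unique)
  thus ?thesis by (simp add: power_divide)
qed

lemma natlem: fixes k X Y Z W :: nat
  assumes "Suc k * X = Suc (Suc (2*k)) * Y" "Y = Z" "Suc k * Z = Suc (2*k) * W"
  shows "Suc k * X = 2 * (2*k+1) * W"
proof -
  have "Suc (Suc (2*k)) * Y = 2 * (Suc k * Z)" using assms(2) by simp
  thus ?thesis using assms(1,3) by simp
qed

lemma choose_rec: "Suc k * (Suc (Suc (2*k)) choose Suc k) = 2 * (2*k+1) * (2*k choose k)"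
proof -
  have a: "Suc k * (Suc (Suc (2*k)) choose Suc k) = Suc (Suc (2*k)) * (Suc (2*k) choose k)"
    by (rule Suc_times_binomial)
  have b: "Suc (2*k) choose k = Suc (2*k) choose Suc k"
    using binomial_symmetric[of k "Suc (2*k)"] by simp
  have c: "Suc k * (Suc (2*k) choose Suc k) = Suc (2*k) * (2*k choose k)"
    by (rule Suc_times_binomial)
  show ?thesis using natlem[OF a b c] .
qed

definition cc :: "nat \<Rightarrow> real" where "cc k = 4^k / (real k * real (2*k choose k))"
definition AA :: "nat \<Rightarrow> real" where "AA k = harm2 k / 4 - harm2 (2*k) + 3/4 * (pi^2/6)"

lemma gen1: fixes D W a :: real assumes "D > 0" "W > 0" shows "D * (4 * a / (2 * D * W)) = 2 * a / W"
  using assms by (simp add: field_simps)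
lemma gen2: fixes q c :: real assumes "q > 0" shows "q * c / q^2 = 2 / q * (c / 2)"
  using assms by (simp add: field_simps power2_eq_square)

lemma cc_rec: assumes "k \<ge> 1" shows "real (2*k+1) * cc (k+1) = real (2*k) * cc k"
proof -
  have ch: "real (Suc k) * real (Suc (Suc (2*k)) choose Suc k) = 2 * real (2*k+1) * real (2*k choose k)"
    by (metis choose_rec of_nat_mult of_nat_numeral)
  have pos: "real (2*k choose k) > 0" by simp
  obtain W where W: "real (2*k choose k) = W" by simp
  have ch': "real (Suc k) * real (Suc (Suc (2*k)) choose Suc k) = 2 * real (2*k+1) * W"
    using ch unfolding W .
  have c1: "cc (k+1) = 4 * 4^k / (2 * real (2*k+1) * W)"
  proof -
    have e: "Suc (Suc (2*k)) = 2 * (k+1)" "Suc k = k+1" by simp_all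
    have d: "real (k+1) * real (2*(k+1) choose (k+1)) = 2 * real (2*k+1) * W" using ch' unfolding e .
    show ?thesis unfolding cc_def d by simp
  qed
  have c2: "cc k = 4^k / (real k * W)" unfolding W[symmetric] by (simp add: cc_def)
  have Wp: "W > 0" using pos W by simp
  have k0: "real k > 0" using assms by simp
  have l: "real (2*k+1) * (4 * 4^k / (2 * real (2*k+1) * W)) = 2 * 4^k / W"
    by (rule gen1) (use Wp in auto)
  have r: "real (2*k) * (4^k / (real k * W)) = 2 * 4^k / W"
    using Wp k0 by (simp add: field_simps)
  show ?thesis unfolding c1 c2 l r ..
qed

lemma cc1: "cc 1 = 2" by (simp add: cc_def)

lemma main: "JJ (2*j+1) = cc (j+1) / 2 \<and> II (2*j+1) = cc (j+1) * AA (j+1)"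
proof (induction j)
  case 0
  have "harm2 1 = 1" "harm2 2 = 5/4" by (simp_all add: harm2_def numeral_2_eq_2)
  then show ?case using JJ1 II1 cc1 by (simp add: AA_def)
next
  case (Suc j)
  let ?k = "j+1"
  have cr: "real (2*?k+1) * cc (?k+1) = real (2*?k) * cc ?k" by (rule cc_rec) simp
  have e: "2*j+1+2 = 2*j+3" "2*j+1+1 = 2*j+2" by simp_all
  have rJ: "real (2*j+3) * JJ (2*j+3) = real (2*j+2) * JJ (2*j+1)"
    using recJ[of "2*j+1"] unfolding e .
  have rI: "real (2*j+3) * II (2*j+3) = real (2*j+2) * II (2*j+1) - 2 / real (2*j+3) * JJ (2*j+3)"
    using recI[of "2*j+1"] unfolding e .
  have h1: "harm2 (j+2) = harm2 (j+1) + 1 / real (j+2)^2" by (simp add: harm2_def)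
  have h2: "harm2 (2*j+4) = harm2 (2*j+2) + 1 / real (2*j+3)^2 + 1 / real (2*j+4)^2"
    by (simp add: harm2_def numeral_eq_Suc)
  have e2: "2*(j+2) = 2*j+4" "2*(j+1) = 2*j+2" by simp_all
  have q: "1 / real (j+2)^2 / 4 = 1 / real (2*j+4)^2" by (simp add: power2_eq_square field_simps)
  have A: "AA (j+2) = AA (j+1) - 1 / real (2*j+3)^2"
    unfolding AA_def e2 h1 h2 using q by (simp only: add_divide_distrib)
  have p3: "real (2*j+3) > 0" by simp
  have "real (2*j+3) * (2 * JJ (2*j+3) - cc (j+2)) = 0"
    using rJ cr Suc.IH by (simp add: algebra_simps)
  hence J: "JJ (2*j+3) = cc (j+2) / 2" using p3 by simp
  have cr': "real (2*j+3) * cc (j+2) = real (2*j+2) * cc (j+1)" using cr by (simp add: algebra_simps)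
  have t1: "real (2*j+3) * (cc (j+2) * AA (j+2)) = real (2*j+2) * cc (j+1) * AA (j+1) - real (2*j+2) * cc (j+1) / real (2*j+3)^2"
  proof -
    have "real (2*j+3) * (cc (j+2) * AA (j+2)) = (real (2*j+3) * cc (j+2)) * AA (j+2)" by simp
    also have "\<dots> = real (2*j+2) * cc (j+1) * (AA (j+1) - 1 / real (2*j+3)^2)" unfolding cr' A ..
    finally show ?thesis by (simp add: algebra_simps add_divide_distrib)
  qed
  have t2: "real (2*j+2) * cc (j+1) / real (2*j+3)^2 = 2 / real (2*j+3) * JJ (2*j+3)"
    unfolding J cr'[symmetric] using p3 by (rule gen2)
  have t3: "real (2*j+2) * II (2*j+1) = real (2*j+2) * cc (j+1) * AA (j+1)" using Suc.IH by simp
  have "real (2*j+3) * II (2*j+3) = real (2*j+3) * (cc (j+2) * AA (j+2))"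
    unfolding t1 t2 rI t3 ..
  hence I: "II (2*j+3) = cc (j+2) * AA (j+2)" using p3 by simp
  have e3: "2 * Suc j + 1 = 2*j+3" "Suc j + 1 = j+2" by simp_all
  show ?case unfolding e3 using J I by simp
qed

lemma zeta2: "zeta_real 2 = pi^2/6"
proof -
  have "(\<lambda>n. 1 / real (Suc n) powr 2) = (\<lambda>n. 1 / (real n + 1)^2)"
    by (rule ext) (simp add: powr_numeral)
  thus ?thesis unfolding zeta_real_def using sums_unique[OF inverse_squares_sums] by simp
qed

lemma genfin: fixes a d h h2 z :: real
  shows "(1/4) * (a * h / d) - a * h2 / d + (3/4) * z * (a / d) = a / d * (h / 4 - h2 + 3/4 * z)"
  by (cases "d = 0") (simp_all add: field_simps)

theorem lemma4:
  fixes k :: nat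
  assumes "k \<ge> 1"
  shows "integral {0..pi/2} (\<lambda>x. x^2 * (cos x)^(2*k-1)) =
    (1/4) * (4^k * harm2 k / (real k * real (2*k choose k)))
    - 4^k * harm2 (2*k) / (real k * real (2*k choose k))
    + (3/4) * zeta_real 2 * (4^k / (real k * real (2*k choose k)))"
proof -
  obtain j where kj: "k = Suc j" using assms by (cases k) auto
  have e: "2*k-1 = 2*j+1" "j+1 = k" using kj by simp_all
  have "integral {0..pi/2} (\<lambda>x. x^2 * (cos x)^(2*k-1)) = II (2*j+1)" unfolding II_def e ..
  also have "\<dots> = cc k * AA k" using main[of j] unfolding e by simp
  also have "\<dots> = (1/4) * (4^k * harm2 k / (real k * real (2*k choose k)))
    - 4^k * harm2 (2*k) / (real k * real (2*k choose k))
    + (3/4) * zeta_real 2 * (4^k / (real k * real (2*k choose k)))"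
    unfolding genfin cc_def AA_def zeta2 ..
  finally show ?thesis .
qed

end
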